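(* Let $m\ge n\ge o\ge 0$ be integers with $m+n+o\ge 4$ such that the complete tripartite graph $K_{m,n,o}$ is connected. Let the vertices of the parts of sizes $m,n,o$ carry the indeterminates $x_1,\dots,x_m$, $y_1,\dots,y_n$, $z_1,\dots,z_o$ respectively. Then the third critical ideal $I_3=I_3(K_{m,n,o},\{X,Y,Z\})\subseteq\mathbb{Z}[x_1,\dots,x_m,y_1,\dots,y_n,z_1,\dots,z_o]$ is: - $\langle 2, x_1,\dots,x_m, y_1,\dots,y_n, z_1,\dots,z_o\rangle$ if $m,n,o\ge 2$; - $\langle x_1,\dots,x_m, y_1,\dots,y_n, z_1+2\rangle$ if $m\ge2$, $n\ge 2$, $o=1$; - $\langle x_1,\dots,x_m, y_1+z_1+2\rangle$ if $m\ge 3$, $n=1$, $o=1$; - $\langle x_1x_2+x_1+x_2,\ x_1z_1+x_1,\ x_2z_1+x_2,\ y_1+z_1+2\rangle$ if $m=2$, $n=1$, $o=1$; - $\langle x_1,\dots,x_m, y_1,\dots,y_n\rangle$ if $m\ge 3$, $n\ge 3$, $o=0$; - $\langle x_1,\dots,x_m, y_1+y_2\rangle$ if $m\ge 3$, $n=2$, $o=0$; - $\langle x_2y_2,\ x_1+x_2,\ y_1+y_2\rangle$ if $m=2$, $n=2$, $o=0$; - $\langle x_1,\dots,x_m\rangle$ if $m\ge 3$, $n=1$, $o=0$.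
   Context: For a finite graph $G$ with an indeterminate $x_u$ for each vertex $u$, the generalized Laplacian matrix $L(G,X_G)$ is the matrix indexed by $V(G)$ with $(u,u)$-entry $x_u$ and $(u,v)$-entry $-m_{uv}$ for $u\ne v$, $m_{uv}$ being the number of edges between $u$ and $v$. The third critical ideal $I_3(G,X_G)$ is the ideal of $\mathbb{Z}[X_G]$ generated by all $3\times 3$ minors of $L(G,X_G)$. $K_{m,n,o}$ is the complete tripartite graph with parts of sizes $m,n,o$ (for $o=0$ it is the complete bipartite graph $K_{m,n}$). *)

theory Defs
  imports "HOL-Library.Poly_Mapping" "Jordan_Normal_Form.Determinant" "Jordan_Normal_Form.DL_Submatrix"
begin

type_synonym zpoly = "(nat \<Rightarrow>\<^sub>0 nat) \<Rightarrow>\<^sub>0 int"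

definition Var :: "nat \<Rightarrow> zpoly" where
  "Var i = Poly_Mapping.single (Poly_Mapping.single i 1) 1"

definition ideal_generated :: "'a::comm_ring_1 set \<Rightarrow> 'a set" where
  "ideal_generated S = {p. \<exists>F c. finite F \<and> F \<subseteq> S \<and> p = (\<Sum>g\<in>F. c g * g)}"

text \<open>A multigraph on vertex set {0..<N} given by the edge multiplicity function mu.\<close>
definition graph_connected :: "nat \<Rightarrow> (nat \<Rightarrow> nat \<Rightarrow> nat) \<Rightarrow> bool" where
  "graph_connected N mu \<longleftrightarrow>
     (\<forall>u<N. \<forall>v<N. (u, v) \<in> {(a, b). a < N \<and> b < N \<and> a \<noteq> b \<and> mu a b > 0}\<^sup>*)"

definition gen_laplacian :: "nat \<Rightarrow> (nat \<Rightarrow> nat \<Rightarrow> nat) \<Rightarrow> zpoly mat" where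
  "gen_laplacian N mu = mat N N (\<lambda>(u, v). if u = v then Var u else - of_nat (mu u v))"

definition critical_ideal :: "nat \<Rightarrow> zpoly mat \<Rightarrow> zpoly set" where
  "critical_ideal k A = ideal_generated
     {det (submatrix A I J) | I J. I \<subseteq> {..<dim_row A} \<and> J \<subseteq> {..<dim_col A}
                                 \<and> card I = k \<and> card J = k}"

text \<open>Complete tripartite graph K_{m,n,p} on {0..<m+n+p}: vertices 0..m-1 form the
first part, m..m+n-1 the second, m+n..m+n+p-1 the third.\<close>
definition tri_part :: "nat \<Rightarrow> nat \<Rightarrow> nat \<Rightarrow> nat" where
  "tri_part m n i = (if i < m then 0 else if i < m + n then 1 else 2)"

definition tri_mult :: "nat \<Rightarrow> nat \<Rightarrow> nat \<Rightarrow> nat \<Rightarrow> nat" where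
  "tri_mult m n u v = (if tri_part m n u \<noteq> tri_part m n v then 1 else 0)"

text \<open>Indeterminates: x_i = Var (i-1), y_j = Var (m+j-1), z_k = Var (m+n+k-1) (1-based).\<close>
definition xv :: "nat \<Rightarrow> zpoly" where "xv i = Var (i - 1)"
definition yv :: "nat \<Rightarrow> nat \<Rightarrow> zpoly" where "yv m j = Var (m + j - 1)"
definition zv :: "nat \<Rightarrow> nat \<Rightarrow> nat \<Rightarrow> zpoly" where "zv m n k = Var (m + n + k - 1)"

end

theory Submission
  imports Defs
begin


definition det3 :: "'a::comm_ring_1 \<Rightarrow> 'a \<Rightarrow> 'a \<Rightarrow> 'a \<Rightarrow> 'a \<Rightarrow> 'a \<Rightarrow> 'a \<Rightarrow> 'a \<Rightarrow> 'a \<Rightarrow> 'a" where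
  "det3 a b c d e f g h i = a*e*i - a*f*h - b*d*i + b*f*g + c*d*h - c*e*g"

lemma det_3x3:
  assumes "A \<in> carrier_mat 3 3"
  shows "det A = det3 (A$$(0,0)) (A$$(0,1)) (A$$(0,2)) (A$$(1,0)) (A$$(1,1)) (A$$(1,2)) (A$$(2,0)) (A$$(2,1)) (A$$(2,2))"
proof -
  have "det A = (\<Sum>i<3. A $$ (i,0) * cofactor A i 0)"
    by (rule laplace_expansion_column[OF assms]) simp
  also have "\<dots> = A $$ (0,0) * cofactor A 0 0 + A $$ (1,0) * cofactor A 1 0 + A $$ (2,0) * cofactor A 2 0"
    by (simp add: numeral_3_eq_3 numeral_2_eq_2 lessThan_Suc)
  finally have d: "det A = \<dots>" .
  have c2: "B \<in> carrier_mat 2 2 \<Longrightarrow> det B = B$$(0,0) * B$$(1,1) - B$$(0,1)*B$$(1,0)" for B :: "'a mat"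
  proof -
    assume B: "B \<in> carrier_mat 2 2"
    have "det B = (\<Sum>i<2. B $$ (i,0) * cofactor B i 0)"
      by (rule laplace_expansion_column[OF B]) simp
    also have "\<dots> = B $$ (0,0) * cofactor B 0 0 + B $$ (1,0) * cofactor B 1 0"
      by (simp add: numeral_2_eq_2 lessThan_Suc)
    also have "\<dots> = B$$(0,0) * B$$(1,1) - B$$(0,1)*B$$(1,0)"
    proof -
      have cm: "mat_delete B i 0 \<in> carrier_mat 1 1" for i using B by (auto simp: mat_delete_dim)
      have h0: "det (mat_delete B 0 0) = B$$(1,1)"
        using det_single[OF cm[of 0]] B by (simp add: mat_delete_def)
      have h1: "det (mat_delete B (Suc 0) 0) = B$$(0,1)"
        using det_single[OF cm[of "Suc 0"]] B by (simp add: mat_delete_def)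
      show ?thesis by (simp add: cofactor_def h0 h1 algebra_simps)
    qed
    finally show ?thesis .
  qed
  show ?thesis unfolding d using assms
    using assms by (simp add: cofactor_def c2 mat_delete_def det3_def algebra_simps numeral_2_eq_2)
qed

lemma pick3:
  assumes "r1 < r2" "r2 < r3"
  shows "pick {r1,r2,r3} 0 = r1" "pick {r1,r2,r3} 1 = r2" "pick {r1,r2,r3} 2 = r3"
proof -
  have e: "{a\<in>{r1,r2,r3}. a < r1} = {}" using assms by auto
  show "pick {r1,r2,r3} 0 = r1" using pick_card_in_set[of r1 "{r1,r2,r3}", unfolded e] by simp
  have e: "{a\<in>{r1,r2,r3}. a < r2} = {r1}" using assms by auto
  show "pick {r1,r2,r3} 1 = r2" using pick_card_in_set[of r2 "{r1,r2,r3}", unfolded e] by (simp del: pick.simps)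
  have e: "{a\<in>{r1,r2,r3}. a < r3} = {r1,r2}" using assms by auto
  show "pick {r1,r2,r3} 2 = r3" using pick_card_in_set[of r3 "{r1,r2,r3}", unfolded e] assms
    by (simp del: pick.simps add: numeral_2_eq_2)
qed

lemma sub3_sorted:
  assumes A: "A \<in> carrier_mat N N"
    and r: "r1 < r2" "r2 < r3" "r3 < N" and c: "c1 < c2" "c2 < c3" "c3 < N"
  shows "det (submatrix A {r1,r2,r3} {c1,c2,c3}) =
    det3 (A$$(r1,c1)) (A$$(r1,c2)) (A$$(r1,c3)) (A$$(r2,c1)) (A$$(r2,c2)) (A$$(r2,c3))
         (A$$(r3,c1)) (A$$(r3,c2)) (A$$(r3,c3))"
proof -
  have e1: "{i. i < dim_row A \<and> i \<in> {r1,r2,r3}} = {r1,r2,r3}" using A r by auto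
  have e2: "{i. i < dim_col A \<and> i \<in> {c1,c2,c3}} = {c1,c2,c3}" using A c by auto
  have cr: "card {r1,r2,r3} = 3" using r by auto
  have cc: "card {c1,c2,c3} = 3" using c by auto
  have S: "submatrix A {r1,r2,r3} {c1,c2,c3} \<in> carrier_mat 3 3"
  proof -
    have "dim_row (submatrix A {r1,r2,r3} {c1,c2,c3}) = 3" by (simp only: dim_submatrix e1 cr)
    moreover have "dim_col (submatrix A {r1,r2,r3} {c1,c2,c3}) = 3" by (simp only: dim_submatrix e2 cc)
    ultimately show ?thesis by auto
  qed
  have ix: "submatrix A {r1,r2,r3} {c1,c2,c3} $$ (a,b) = A $$ (pick {r1,r2,r3} a, pick {c1,c2,c3} b)"
    if "a < 3" "b < 3" for a b
    by (rule submatrix_index) (use that e1 e2 cr cc in auto)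
  show ?thesis
    unfolding det_3x3[OF S] by (simp del: pick.simps add: ix pick3 pick3(2)[unfolded One_nat_def] r c)
qed

lemma card3_sorted:
  assumes "card (S::nat set) = 3"
  obtains a b c where "a < b" "b < c" "S = {a,b,c}"
proof -
  obtain x y z where S: "S = {x,y,z}" "x \<noteq> y" "y \<noteq> z" "x \<noteq> z"
    using assms card_3_iff by metis
  have "x < y \<and> y < z \<or> x < z \<and> z < y \<or> y < x \<and> x < z \<or> y < z \<and> z < x \<or> z < x \<and> x < y \<or> z < y \<and> y < x"
    using S by linarith
  then have "\<exists>a b c. a < b \<and> b < c \<and> S = {a,b,c}"
  proof (elim disjE)
    assume h: "x < y \<and> y < z" show ?thesis using h S by (intro exI[of _ x] exI[of _ y] exI[of _ z]) auto
  next
    assume h: "x < z \<and> z < y" show ?thesis using h S by (intro exI[of _ x] exI[of _ z] exI[of _ y]) auto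
  next
    assume h: "y < x \<and> x < z" show ?thesis using h S by (intro exI[of _ y] exI[of _ x] exI[of _ z]) auto
  next
    assume h: "y < z \<and> z < x" show ?thesis using h S by (intro exI[of _ y] exI[of _ z] exI[of _ x]) auto
  next
    assume h: "z < x \<and> x < y" show ?thesis using h S by (intro exI[of _ z] exI[of _ x] exI[of _ y]) auto
  next
    assume h: "z < y \<and> y < x" show ?thesis using h S by (intro exI[of _ z] exI[of _ y] exI[of _ x]) auto
  qed
  then show ?thesis using that by blast
qed



definition dd :: "'a::comm_ring_1 mat \<Rightarrow> nat \<Rightarrow> nat \<Rightarrow> nat \<Rightarrow> nat \<Rightarrow> nat \<Rightarrow> nat \<Rightarrow> 'a" where
  "dd A r1 r2 r3 c1 c2 c3 = det3 (A$$(r1,c1)) (A$$(r1,c2)) (A$$(r1,c3)) (A$$(r2,c1)) (A$$(r2,c2)) (A$$(r2,c3))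
         (A$$(r3,c1)) (A$$(r3,c2)) (A$$(r3,c3))"

lemma sub3_rows:
  assumes A: "A \<in> carrier_mat N N"
    and r: "r1 \<noteq> r2" "r2 \<noteq> r3" "r1 \<noteq> r3" "r1 < N" "r2 < N" "r3 < N"
    and c: "c1 < c2" "c2 < c3" "c3 < N"
  shows "det (submatrix A {r1,r2,r3} {c1,c2,c3}) = dd A r1 r2 r3 c1 c2 c3 \<or>
         det (submatrix A {r1,r2,r3} {c1,c2,c3}) = - dd A r1 r2 r3 c1 c2 c3"
proof -
  have key: "det (submatrix A {r1,r2,r3} {c1,c2,c3}) = dd A s1 s2 s3 c1 c2 c3"
    if "s1<s2" "s2<s3" "s3<N" "{r1,r2,r3} = {s1,s2,s3}" for s1 s2 s3
    using sub3_sorted[OF A that(1-3) c] that(4) unfolding dd_def by simp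
  have "r1<r2 \<and> r2<r3 \<or> r1<r3 \<and> r3<r2 \<or> r2<r1 \<and> r1<r3 \<or> r2<r3 \<and> r3<r1 \<or> r3<r1 \<and> r1<r2 \<or> r3<r2 \<and> r2<r1"
    using r by linarith
  then show ?thesis
  proof (elim disjE)
    assume h: "r1<r2 \<and> r2<r3"
    have "det (submatrix A {r1,r2,r3} {c1,c2,c3}) = dd A r1 r2 r3 c1 c2 c3"
      by (rule key) (use h r in auto)
    moreover have "dd A r1 r2 r3 c1 c2 c3 = dd A r1 r2 r3 c1 c2 c3 \<or> dd A r1 r2 r3 c1 c2 c3 = - dd A r1 r2 r3 c1 c2 c3"
      by (simp add: dd_def det3_def algebra_simps)
    ultimately show ?thesis by auto
  next
    assume h: "r1<r3 \<and> r3<r2"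
    have "det (submatrix A {r1,r2,r3} {c1,c2,c3}) = dd A r1 r3 r2 c1 c2 c3"
      by (rule key) (use h r in auto)
    moreover have "dd A r1 r3 r2 c1 c2 c3 = dd A r1 r2 r3 c1 c2 c3 \<or> dd A r1 r3 r2 c1 c2 c3 = - dd A r1 r2 r3 c1 c2 c3"
      by (simp add: dd_def det3_def algebra_simps)
    ultimately show ?thesis by auto
  next
    assume h: "r2<r1 \<and> r1<r3"
    have "det (submatrix A {r1,r2,r3} {c1,c2,c3}) = dd A r2 r1 r3 c1 c2 c3"
      by (rule key) (use h r in auto)
    moreover have "dd A r2 r1 r3 c1 c2 c3 = dd A r1 r2 r3 c1 c2 c3 \<or> dd A r2 r1 r3 c1 c2 c3 = - dd A r1 r2 r3 c1 c2 c3"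
      by (simp add: dd_def det3_def algebra_simps)
    ultimately show ?thesis by auto
  next
    assume h: "r2<r3 \<and> r3<r1"
    have "det (submatrix A {r1,r2,r3} {c1,c2,c3}) = dd A r2 r3 r1 c1 c2 c3"
      by (rule key) (use h r in auto)
    moreover have "dd A r2 r3 r1 c1 c2 c3 = dd A r1 r2 r3 c1 c2 c3 \<or> dd A r2 r3 r1 c1 c2 c3 = - dd A r1 r2 r3 c1 c2 c3"
      by (simp add: dd_def det3_def algebra_simps)
    ultimately show ?thesis by auto
  next
    assume h: "r3<r1 \<and> r1<r2"
    have "det (submatrix A {r1,r2,r3} {c1,c2,c3}) = dd A r3 r1 r2 c1 c2 c3"
      by (rule key) (use h r in auto)
    moreover have "dd A r3 r1 r2 c1 c2 c3 = dd A r1 r2 r3 c1 c2 c3 \<or> dd A r3 r1 r2 c1 c2 c3 = - dd A r1 r2 r3 c1 c2 c3"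
      by (simp add: dd_def det3_def algebra_simps)
    ultimately show ?thesis by auto
  next
    assume h: "r3<r2 \<and> r2<r1"
    have "det (submatrix A {r1,r2,r3} {c1,c2,c3}) = dd A r3 r2 r1 c1 c2 c3"
      by (rule key) (use h r in auto)
    moreover have "dd A r3 r2 r1 c1 c2 c3 = dd A r1 r2 r3 c1 c2 c3 \<or> dd A r3 r2 r1 c1 c2 c3 = - dd A r1 r2 r3 c1 c2 c3"
      by (simp add: dd_def det3_def algebra_simps)
    ultimately show ?thesis by auto
  qed
qed


lemma sub3_pm:
  assumes A: "A \<in> carrier_mat N N"
    and r: "r1 \<noteq> r2" "r2 \<noteq> r3" "r1 \<noteq> r3" "r1 < N" "r2 < N" "r3 < N"
    and c: "c1 \<noteq> c2" "c2 \<noteq> c3" "c1 \<noteq> c3" "c1 < N" "c2 < N" "c3 < N"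
  shows "det (submatrix A {r1,r2,r3} {c1,c2,c3}) = dd A r1 r2 r3 c1 c2 c3 \<or>
         det (submatrix A {r1,r2,r3} {c1,c2,c3}) = - dd A r1 r2 r3 c1 c2 c3"
proof -
  have key: "det (submatrix A {r1,r2,r3} {c1,c2,c3}) = dd A r1 r2 r3 s1 s2 s3 \<or>
      det (submatrix A {r1,r2,r3} {c1,c2,c3}) = - dd A r1 r2 r3 s1 s2 s3"
    if "s1<s2" "s2<s3" "s3<N" "{c1,c2,c3} = {s1,s2,s3}" for s1 s2 s3
    using sub3_rows[OF A r that(1-3)] that(4) by simp
  have "c1<c2 \<and> c2<c3 \<or> c1<c3 \<and> c3<c2 \<or> c2<c1 \<and> c1<c3 \<or> c2<c3 \<and> c3<c1 \<or> c3<c1 \<and> c1<c2 \<or> c3<c2 \<and> c2<c1"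
    using c by linarith
  then show ?thesis
  proof (elim disjE)
    assume h: "c1<c2 \<and> c2<c3"
    have "det (submatrix A {r1,r2,r3} {c1,c2,c3}) = dd A r1 r2 r3 c1 c2 c3 \<or> det (submatrix A {r1,r2,r3} {c1,c2,c3}) = - dd A r1 r2 r3 c1 c2 c3"
      by (rule key) (use h c in auto)
    moreover have "dd A r1 r2 r3 c1 c2 c3 = dd A r1 r2 r3 c1 c2 c3 \<or> dd A r1 r2 r3 c1 c2 c3 = - dd A r1 r2 r3 c1 c2 c3"
      by (simp add: dd_def det3_def algebra_simps)
    ultimately show ?thesis by auto
  next
    assume h: "c1<c3 \<and> c3<c2"
    have "det (submatrix A {r1,r2,r3} {c1,c2,c3}) = dd A r1 r2 r3 c1 c3 c2 \<or> det (submatrix A {r1,r2,r3} {c1,c2,c3}) = - dd A r1 r2 r3 c1 c3 c2"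
      by (rule key) (use h c in auto)
    moreover have "dd A r1 r2 r3 c1 c3 c2 = dd A r1 r2 r3 c1 c2 c3 \<or> dd A r1 r2 r3 c1 c3 c2 = - dd A r1 r2 r3 c1 c2 c3"
      by (simp add: dd_def det3_def algebra_simps)
    ultimately show ?thesis by auto
  next
    assume h: "c2<c1 \<and> c1<c3"
    have "det (submatrix A {r1,r2,r3} {c1,c2,c3}) = dd A r1 r2 r3 c2 c1 c3 \<or> det (submatrix A {r1,r2,r3} {c1,c2,c3}) = - dd A r1 r2 r3 c2 c1 c3"
      by (rule key) (use h c in auto)
    moreover have "dd A r1 r2 r3 c2 c1 c3 = dd A r1 r2 r3 c1 c2 c3 \<or> dd A r1 r2 r3 c2 c1 c3 = - dd A r1 r2 r3 c1 c2 c3"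
      by (simp add: dd_def det3_def algebra_simps)
    ultimately show ?thesis by auto
  next
    assume h: "c2<c3 \<and> c3<c1"
    have "det (submatrix A {r1,r2,r3} {c1,c2,c3}) = dd A r1 r2 r3 c2 c3 c1 \<or> det (submatrix A {r1,r2,r3} {c1,c2,c3}) = - dd A r1 r2 r3 c2 c3 c1"
      by (rule key) (use h c in auto)
    moreover have "dd A r1 r2 r3 c2 c3 c1 = dd A r1 r2 r3 c1 c2 c3 \<or> dd A r1 r2 r3 c2 c3 c1 = - dd A r1 r2 r3 c1 c2 c3"
      by (simp add: dd_def det3_def algebra_simps)
    ultimately show ?thesis by auto
  next
    assume h: "c3<c1 \<and> c1<c2"
    have "det (submatrix A {r1,r2,r3} {c1,c2,c3}) = dd A r1 r2 r3 c3 c1 c2 \<or> det (submatrix A {r1,r2,r3} {c1,c2,c3}) = - dd A r1 r2 r3 c3 c1 c2"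
      by (rule key) (use h c in auto)
    moreover have "dd A r1 r2 r3 c3 c1 c2 = dd A r1 r2 r3 c1 c2 c3 \<or> dd A r1 r2 r3 c3 c1 c2 = - dd A r1 r2 r3 c1 c2 c3"
      by (simp add: dd_def det3_def algebra_simps)
    ultimately show ?thesis by auto
  next
    assume h: "c3<c2 \<and> c2<c1"
    have "det (submatrix A {r1,r2,r3} {c1,c2,c3}) = dd A r1 r2 r3 c3 c2 c1 \<or> det (submatrix A {r1,r2,r3} {c1,c2,c3}) = - dd A r1 r2 r3 c3 c2 c1"
      by (rule key) (use h c in auto)
    moreover have "dd A r1 r2 r3 c3 c2 c1 = dd A r1 r2 r3 c1 c2 c3 \<or> dd A r1 r2 r3 c3 c2 c1 = - dd A r1 r2 r3 c1 c2 c3"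
      by (simp add: dd_def det3_def algebra_simps)
    ultimately show ?thesis by auto
  qed
qed


lemma ig_gen: "g \<in> S \<Longrightarrow> g \<in> ideal_generated S"
  unfolding ideal_generated_def by (intro CollectI exI[of _ "{g}"] exI[of _ "\<lambda>_. 1"]) auto

lemma ig_0: "0 \<in> ideal_generated S"
  unfolding ideal_generated_def by (intro CollectI exI[of _ "{}"]) auto

lemma ig_add:
  assumes "a \<in> ideal_generated S" "b \<in> ideal_generated S"
  shows "a + b \<in> ideal_generated S"
proof -
  obtain F1 c1 where 1: "finite F1" "F1 \<subseteq> S" "a = (\<Sum>g\<in>F1. c1 g * g)"
    using assms(1) unfolding ideal_generated_def by auto
  obtain F2 c2 where 2: "finite F2" "F2 \<subseteq> S" "b = (\<Sum>g\<in>F2. c2 g * g)"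
    using assms(2) unfolding ideal_generated_def by auto
  define c where "c = (\<lambda>g. (if g \<in> F1 then c1 g else 0) + (if g \<in> F2 then c2 g else 0))"
  have f: "finite (F1 \<union> F2)" using 1 2 by auto
  have e1: "(\<Sum>g\<in>F1\<union>F2. c g * g) = (\<Sum>g\<in>F1\<union>F2. (if g \<in> F1 then c1 g * g else 0) + (if g \<in> F2 then c2 g * g else 0))"
    by (rule sum.cong) (simp_all add: c_def distrib_right)
  have e2: "(\<Sum>g\<in>F1\<union>F2. (if g \<in> F1 then c1 g * g else 0)) = (\<Sum>g\<in>F1. c1 g * g)"
  proof -
    have "(\<Sum>g\<in>F1\<union>F2. (if g \<in> F1 then c1 g * g else 0)) = (\<Sum>g\<in>(F1\<union>F2) \<inter> F1. c1 g * g)"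
      by (rule sum.inter_restrict[OF f, symmetric])
    also have "(F1\<union>F2) \<inter> F1 = F1" by blast
    finally show ?thesis .
  qed
  have e3: "(\<Sum>g\<in>F1\<union>F2. (if g \<in> F2 then c2 g * g else 0)) = (\<Sum>g\<in>F2. c2 g * g)"
  proof -
    have "(\<Sum>g\<in>F1\<union>F2. (if g \<in> F2 then c2 g * g else 0)) = (\<Sum>g\<in>(F1\<union>F2) \<inter> F2. c2 g * g)"
      by (rule sum.inter_restrict[OF f, symmetric])
    also have "(F1\<union>F2) \<inter> F2 = F2" by blast
    finally show ?thesis .
  qed
  have "a + b = (\<Sum>g\<in>F1\<union>F2. c g * g)"
    unfolding e1 sum.distrib e2 e3 1(3) 2(3) ..
  moreover have "F1 \<union> F2 \<subseteq> S" using 1 2 by auto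
  ultimately show ?thesis unfolding ideal_generated_def
    by (intro CollectI exI[of _ "F1 \<union> F2"] exI[of _ c]) (use f in auto)
qed

lemma ig_mult:
  assumes "a \<in> ideal_generated S"
  shows "r * a \<in> ideal_generated S"
proof -
  obtain F c where 1: "finite F" "F \<subseteq> S" "a = (\<Sum>g\<in>F. c g * g)"
    using assms unfolding ideal_generated_def by auto
  have "r * a = (\<Sum>g\<in>F. (r * c g) * g)" using 1 by (simp add: sum_distrib_left mult.assoc)
  then show ?thesis unfolding ideal_generated_def
    by (intro CollectI exI[of _ F] exI[of _ "\<lambda>g. r * c g"]) (use 1 in auto)
qed

lemma ig_neg: "a \<in> ideal_generated S \<Longrightarrow> - a \<in> ideal_generated S"
  using ig_mult[of a S "-1"] by simp

lemma ig_diff: "a \<in> ideal_generated S \<Longrightarrow> b \<in> ideal_generated S \<Longrightarrow> a - b \<in> ideal_generated S"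
  using ig_add[of a S "-b"] ig_neg[of b S] by simp

lemma ig_sum: "finite F \<Longrightarrow> (\<And>x. x \<in> F \<Longrightarrow> f x \<in> ideal_generated S) \<Longrightarrow> (\<Sum>x\<in>F. f x) \<in> ideal_generated S"
  by (induction F rule: finite_induct) (auto intro: ig_0 ig_add)

lemma ig_mono:
  assumes "S \<subseteq> ideal_generated T"
  shows "ideal_generated S \<subseteq> ideal_generated T"
proof
  fix p assume "p \<in> ideal_generated S"
  then obtain F c where 1: "finite F" "F \<subseteq> S" "p = (\<Sum>g\<in>F. c g * g)"
    unfolding ideal_generated_def by auto
  show "p \<in> ideal_generated T" unfolding 1(3)
    by (rule ig_sum[OF 1(1)]) (use 1(2) assms in \<open>auto intro: ig_mult\<close>)
qed

lemma ig_eqI: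
  "S \<subseteq> ideal_generated T \<Longrightarrow> T \<subseteq> ideal_generated S \<Longrightarrow> ideal_generated S = ideal_generated T"
  using ig_mono by blast

lemma ig_pm: "g \<in> ideal_generated S \<or> - g \<in> ideal_generated S \<Longrightarrow> g \<in> ideal_generated S"
  using ig_neg[of "-g" S] by auto

lemma ig_mult3:
  assumes "x - x' \<in> ideal_generated S" "y - y' \<in> ideal_generated S" "z - z' \<in> ideal_generated S"
  shows "x*y*z - x'*y'*z' \<in> ideal_generated S"
proof -
  have "x*y*z - x'*y'*z' = y*z*(x-x') + x'*z*(y-y') + x'*y'*(z-z')" by (simp add: algebra_simps)
  then show ?thesis using assms by (auto intro!: ig_add ig_mult)
qed

lemma det3_cong:
  assumes "a - a' \<in> ideal_generated S" "b - b' \<in> ideal_generated S" "c - c' \<in> ideal_generated S"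
    "d - d' \<in> ideal_generated S" "e - e' \<in> ideal_generated S" "f - f' \<in> ideal_generated S"
    "g - g' \<in> ideal_generated S" "h - h' \<in> ideal_generated S" "i - i' \<in> ideal_generated S"
    "det3 a' b' c' d' e' f' g' h' i' \<in> ideal_generated S"
  shows "det3 a b c d e f g h i \<in> ideal_generated S"
proof -
  have "det3 a b c d e f g h i = det3 a' b' c' d' e' f' g' h' i' +
     ((a*e*i - a'*e'*i') - (a*f*h - a'*f'*h') - (b*d*i - b'*d'*i') + (b*f*g - b'*f'*g') + (c*d*h - c'*d'*h') - (c*e*g - c'*e'*g'))" (is "_ = ?r")
    by (simp add: det3_def algebra_simps)
  note eq = this
  have t1: "a*e*i - a'*e'*i' \<in> ideal_generated S" by (rule ig_mult3) (use assms in auto)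
  have t2: "a*f*h - a'*f'*h' \<in> ideal_generated S" by (rule ig_mult3) (use assms in auto)
  have t3: "b*d*i - b'*d'*i' \<in> ideal_generated S" by (rule ig_mult3) (use assms in auto)
  have t4: "b*f*g - b'*f'*g' \<in> ideal_generated S" by (rule ig_mult3) (use assms in auto)
  have t5: "c*d*h - c'*d'*h' \<in> ideal_generated S" by (rule ig_mult3) (use assms in auto)
  have t6: "c*e*g - c'*e'*g' \<in> ideal_generated S" by (rule ig_mult3) (use assms in auto)
  show ?thesis unfolding eq
    by (rule ig_add[OF assms(10) ig_diff[OF ig_add[OF ig_add[OF ig_diff[OF ig_diff[OF t1 t2] t3] t4] t5] t6]])
qed

lemma minors_sub:
  fixes A :: "zpoly mat"
  assumes A: "A \<in> carrier_mat N N"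
    and cong: "\<And>i j. i < N \<Longrightarrow> j < N \<Longrightarrow> A$$(i,j) - E i j \<in> ideal_generated G"
    and dE: "\<And>r1 r2 r3 c1 c2 c3. r1 < N \<Longrightarrow> r2 < N \<Longrightarrow> r3 < N \<Longrightarrow> c1 < N \<Longrightarrow> c2 < N \<Longrightarrow> c3 < N \<Longrightarrow>
       det3 (E r1 c1) (E r1 c2) (E r1 c3) (E r2 c1) (E r2 c2) (E r2 c3) (E r3 c1) (E r3 c2) (E r3 c3) \<in> ideal_generated G"
  shows "critical_ideal 3 A \<subseteq> ideal_generated G"
  unfolding critical_ideal_def
proof (rule ig_mono, rule subsetI)
  fix x assume "x \<in> {det (submatrix A I J) |I J. I \<subseteq> {..<dim_row A} \<and> J \<subseteq> {..<dim_col A} \<and> card I = 3 \<and> card J = 3}"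
  then obtain I J where x: "x = det (submatrix A I J)" and IJ: "I \<subseteq> {..<N}" "J \<subseteq> {..<N}" "card I = 3" "card J = 3"
    using A by auto
  obtain r1 r2 r3 where r: "r1 < r2" "r2 < r3" "I = {r1,r2,r3}" using card3_sorted[OF IJ(3)] by metis
  obtain c1 c2 c3 where c: "c1 < c2" "c2 < c3" "J = {c1,c2,c3}" using card3_sorted[OF IJ(4)] by metis
  have rN: "r1 < N" "r2 < N" "r3 < N" using IJ(1) r by auto
  have cN: "c1 < N" "c2 < N" "c3 < N" using IJ(2) c by auto
  have "x = det3 (A$$(r1,c1)) (A$$(r1,c2)) (A$$(r1,c3)) (A$$(r2,c1)) (A$$(r2,c2)) (A$$(r2,c3))
         (A$$(r3,c1)) (A$$(r3,c2)) (A$$(r3,c3))"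
    unfolding x r(3) c(3) by (rule sub3_sorted[OF A r(1,2) rN(3) c(1,2) cN(3)])
  also have "\<dots> \<in> ideal_generated G"
    by (rule det3_cong) (use rN cN in \<open>auto intro: cong dE\<close>)
  finally show "x \<in> ideal_generated G" .
qed

lemma gen_in:
  fixes A :: "zpoly mat"
  assumes A: "A \<in> carrier_mat N N"
    and r: "r1 \<noteq> r2" "r2 \<noteq> r3" "r1 \<noteq> r3" "r1 < N" "r2 < N" "r3 < N"
    and c: "c1 \<noteq> c2" "c2 \<noteq> c3" "c1 \<noteq> c3" "c1 < N" "c2 < N" "c3 < N"
    and g: "dd A r1 r2 r3 c1 c2 c3 = g \<or> dd A r1 r2 r3 c1 c2 c3 = - g"
  shows "g \<in> critical_ideal 3 A"
proof -
  have "det (submatrix A {r1,r2,r3} {c1,c2,c3}) \<in> critical_ideal 3 A"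
    unfolding critical_ideal_def
    apply (rule ig_gen)
    apply (rule CollectI)
    apply (rule exI[of _ "{r1,r2,r3}"])
    apply (rule exI[of _ "{c1,c2,c3}"])
    using A r c by auto
  then show ?thesis using sub3_pm[OF A r c] g unfolding critical_ideal_def
    using ig_neg by fastforce
qed



lemma det3_rows_eq:
  fixes F :: "nat \<Rightarrow> nat \<Rightarrow> 'a::comm_ring_1"
  assumes "a1 = a2 \<or> a2 = a3 \<or> a1 = a3"
  shows "det3 (F a1 b1) (F a1 b2) (F a1 b3) (F a2 b1) (F a2 b2) (F a2 b3) (F a3 b1) (F a3 b2) (F a3 b3) = 0"
  using assms by (auto simp: det3_def algebra_simps)

lemma det3_class3:
  fixes F :: "nat \<Rightarrow> nat \<Rightarrow> 'a::comm_ring_1"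
  assumes "a1 < 3" "a2 < 3" "a3 < 3" "b1 < 3" "b2 < 3" "b3 < 3"
  shows "det3 (F a1 b1) (F a1 b2) (F a1 b3) (F a2 b1) (F a2 b2) (F a2 b3) (F a3 b1) (F a3 b2) (F a3 b3) = 0 \<or>
    det3 (F a1 b1) (F a1 b2) (F a1 b3) (F a2 b1) (F a2 b2) (F a2 b3) (F a3 b1) (F a3 b2) (F a3 b3) =
     det3 (F 0 0) (F 0 1) (F 0 2) (F 1 0) (F 1 1) (F 1 2) (F 2 0) (F 2 1) (F 2 2) \<or>
    det3 (F a1 b1) (F a1 b2) (F a1 b3) (F a2 b1) (F a2 b2) (F a2 b3) (F a3 b1) (F a3 b2) (F a3 b3) =
     - det3 (F 0 0) (F 0 1) (F 0 2) (F 1 0) (F 1 1) (F 1 2) (F 2 0) (F 2 1) (F 2 2)"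
proof -
  have c: "x < 3 \<Longrightarrow> x = 0 \<or> x = 1 \<or> x = 2" for x :: nat by auto
  show ?thesis
    using c[OF assms(1)] c[OF assms(2)] c[OF assms(3)] c[OF assms(4)] c[OF assms(5)] c[OF assms(6)]
    by (elim disjE; simp add: det3_def algebra_simps)
qed


lemma det3_class2:
  fixes F :: "nat \<Rightarrow> nat \<Rightarrow> 'a::comm_ring_1"
  assumes "a1 < 2" "a2 < 2" "a3 < 2"
  shows "det3 (F a1 b1) (F a1 b2) (F a1 b3) (F a2 b1) (F a2 b2) (F a2 b3) (F a3 b1) (F a3 b2) (F a3 b3) = 0"
  by (rule det3_rows_eq) (use assms in linarith)

definition Fg :: "'a::comm_ring_1 \<Rightarrow> 'a \<Rightarrow> 'a \<Rightarrow> 'a \<Rightarrow> nat \<Rightarrow> nat \<Rightarrow> 'a" where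
  "Fg d0 d1 d2 e a b = (if a = b then (if a = 0 then d0 else if a = 1 then d1 else d2)
                        else if a \<noteq> 0 \<and> b \<noteq> 0 then e else -1)"

abbreviation "LL m n p \<equiv> gen_laplacian (m+n+p) (tri_mult m n)"

lemma LL_carrier: "LL m n p \<in> carrier_mat (m+n+p) (m+n+p)"
  unfolding gen_laplacian_def by simp

lemma LL_ent: "i < m+n+p \<Longrightarrow> j < m+n+p \<Longrightarrow> LL m n p $$ (i,j) =
   (if i = j then Var i else if tri_part m n i = tri_part m n j then 0 else -1)"
  unfolding gen_laplacian_def tri_mult_def by simp

lemma tri_part_lt3: "tri_part m n i < 3"
  unfolding tri_part_def by auto

lemma Var_x: "i < m \<Longrightarrow> Var i \<in> xv ` {1..m}"
  unfolding xv_def by (rule image_eqI[of _ _ "i+1"]) auto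
lemma Var_y: "m \<le> i \<Longrightarrow> i < m + n \<Longrightarrow> Var i \<in> yv m ` {1..n}"
  unfolding yv_def by (rule image_eqI[of _ _ "i-m+1"]) auto
lemma Var_z: "m + n \<le> i \<Longrightarrow> i < m + n + p \<Longrightarrow> Var i \<in> zv m n ` {1..p}"
  unfolding zv_def by (rule image_eqI[of _ _ "i-m-n+1"]) auto

lemma genA:
  assumes "tri_part m n u = P" "tri_part m n u' = P" "tri_part m n c = Q" "tri_part m n c' = Q"
    "tri_part m n b = R" "P \<noteq> Q" "Q \<noteq> R" "P \<noteq> R" "u \<noteq> u'" "c \<noteq> c'"
    "u < m+n+p" "u' < m+n+p" "c < m+n+p" "c' < m+n+p" "b < m+n+p"
  shows "Var u \<in> critical_ideal 3 (LL m n p)"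
proof (rule gen_in[of "LL m n p" "m+n+p" u u' c u b c', OF LL_carrier])
  show "dd (LL m n p) u u' c u b c' = Var u \<or> dd (LL m n p) u u' c u b c' = - Var u"
    using assms by (auto simp: dd_def LL_ent) (auto simp: det3_def algebra_simps)
qed (use assms in auto)

lemma genB:
  assumes "tri_part m n u = P" "tri_part m n u' = P" "tri_part m n u'' = P" "tri_part m n w \<noteq> P"
    "u \<noteq> u'" "u \<noteq> u''" "u' \<noteq> u''"
    "u < m+n+p" "u' < m+n+p" "u'' < m+n+p" "w < m+n+p"
  shows "Var u \<in> critical_ideal 3 (LL m n p)"
proof (rule gen_in[of "LL m n p" "m+n+p" u u' w u u'' w, OF LL_carrier])
  show "dd (LL m n p) u u' w u u'' w = Var u \<or> dd (LL m n p) u u' w u u'' w = - Var u"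
    using assms by (auto simp: dd_def LL_ent) (auto simp: det3_def algebra_simps)
qed (use assms in auto)

lemma gen_two:
  assumes "tri_part m n a1 = 0" "tri_part m n a2 = 0" "tri_part m n b1 = 1" "tri_part m n b2 = 1"
    "tri_part m n c1 = 2" "tri_part m n c2 = 2" "a1 \<noteq> a2" "b1 \<noteq> b2" "c1 \<noteq> c2"
    "a1 < m+n+p" "a2 < m+n+p" "b1 < m+n+p" "b2 < m+n+p" "c1 < m+n+p" "c2 < m+n+p"
  shows "2 \<in> critical_ideal 3 (LL m n p)"
proof (rule gen_in[of "LL m n p" "m+n+p" a1 b1 c1 a2 b2 c2, OF LL_carrier])
  show "dd (LL m n p) a1 b1 c1 a2 b2 c2 = 2 \<or> dd (LL m n p) a1 b1 c1 a2 b2 c2 = - 2"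
    using assms by (auto simp: dd_def LL_ent) (auto simp: det3_def algebra_simps)
qed (use assms in auto)

lemma gen_z2:
  assumes "tri_part m n a1 = 0" "tri_part m n a2 = 0" "tri_part m n b1 = 1" "tri_part m n b2 = 1"
    "tri_part m n c = 2" "a1 \<noteq> a2" "b1 \<noteq> b2"
    "a1 < m+n+p" "a2 < m+n+p" "b1 < m+n+p" "b2 < m+n+p" "c < m+n+p"
  shows "Var c + 2 \<in> critical_ideal 3 (LL m n p)"
proof (rule gen_in[of "LL m n p" "m+n+p" a1 b1 c a2 b2 c, OF LL_carrier])
  show "dd (LL m n p) a1 b1 c a2 b2 c = Var c + 2 \<or> dd (LL m n p) a1 b1 c a2 b2 c = - (Var c + 2)"
    using assms by (auto simp: dd_def LL_ent) (auto simp: det3_def algebra_simps)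
qed (use assms in auto)

lemma gen_yz2:
  assumes "tri_part m n a1 = 0" "tri_part m n a2 = 0" "tri_part m n b = 1"
    "tri_part m n c = 2" "a1 \<noteq> a2"
    "a1 < m+n+p" "a2 < m+n+p" "b < m+n+p" "c < m+n+p"
  shows "Var b + Var c + 2 \<in> critical_ideal 3 (LL m n p)"
proof (rule gen_in[of "LL m n p" "m+n+p" a1 b c a2 b c, OF LL_carrier])
  show "dd (LL m n p) a1 b c a2 b c = Var b + Var c + 2 \<or> dd (LL m n p) a1 b c a2 b c = - (Var b + Var c + 2)"
    using assms by (auto simp: dd_def LL_ent) (auto simp: det3_def algebra_simps)
qed (use assms in auto)

lemma gen_y1y2:
  assumes "tri_part m n a1 = 0" "tri_part m n a2 = 0" "tri_part m n b1 = 1" "tri_part m n b2 = 1"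
    "a1 \<noteq> a2" "b1 \<noteq> b2"
    "a1 < m+n+p" "a2 < m+n+p" "b1 < m+n+p" "b2 < m+n+p"
  shows "Var b1 + Var b2 \<in> critical_ideal 3 (LL m n p)"
proof (rule gen_in[of "LL m n p" "m+n+p" a1 b1 b2 a2 b1 b2, OF LL_carrier])
  show "dd (LL m n p) a1 b1 b2 a2 b1 b2 = Var b1 + Var b2 \<or> dd (LL m n p) a1 b1 b2 a2 b1 b2 = - (Var b1 + Var b2)"
    using assms by (auto simp: dd_def LL_ent) (auto simp: det3_def algebra_simps)
qed (use assms in auto)



lemma minors_cls:
  fixes F :: "nat \<Rightarrow> nat \<Rightarrow> zpoly"
  assumes A: "A \<in> carrier_mat N N"
    and cong: "\<And>i j. i < N \<Longrightarrow> j < N \<Longrightarrow> A $$ (i,j) - F (cls i) (cls j) \<in> ideal_generated G"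
    and cls: "\<And>i. i < N \<Longrightarrow> cls i < 3"
    and D: "det3 (F 0 0) (F 0 1) (F 0 2) (F 1 0) (F 1 1) (F 1 2) (F 2 0) (F 2 1) (F 2 2) \<in> ideal_generated G"
  shows "critical_ideal 3 A \<subseteq> ideal_generated G"
proof (rule minors_sub[OF A, where E = "\<lambda>i j. F (cls i) (cls j)"])
  show "A $$ (i, j) - F (cls i) (cls j) \<in> ideal_generated G" if "i < N" "j < N" for i j
    using cong that .
  fix r1 r2 r3 c1 c2 c3 assume "r1 < N" "r2 < N" "r3 < N" "c1 < N" "c2 < N" "c3 < N"
  then have "cls r1 < 3" "cls r2 < 3" "cls r3 < 3" "cls c1 < 3" "cls c2 < 3" "cls c3 < 3" using cls by auto
  from det3_class3[OF this, of F] D ig_0 ig_neg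
  show "det3 (F (cls r1) (cls c1)) (F (cls r1) (cls c2)) (F (cls r1) (cls c3)) (F (cls r2) (cls c1))
          (F (cls r2) (cls c2)) (F (cls r2) (cls c3)) (F (cls r3) (cls c1)) (F (cls r3) (cls c2))
          (F (cls r3) (cls c3)) \<in> ideal_generated G" by metis
qed

lemma minors_cls2:
  fixes F :: "nat \<Rightarrow> nat \<Rightarrow> zpoly"
  assumes A: "A \<in> carrier_mat N N"
    and cong: "\<And>i j. i < N \<Longrightarrow> j < N \<Longrightarrow> A $$ (i,j) - F (cls i) (cls j) \<in> ideal_generated G"
    and cls: "\<And>i. i < N \<Longrightarrow> cls i < 2"
  shows "critical_ideal 3 A \<subseteq> ideal_generated G"
proof (rule minors_sub[OF A, where E = "\<lambda>i j. F (cls i) (cls j)"])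
  show "A $$ (i, j) - F (cls i) (cls j) \<in> ideal_generated G" if "i < N" "j < N" for i j
    using cong that .
  fix r1 r2 r3 c1 c2 c3 assume "r1 < N" "r2 < N" "r3 < N" "c1 < N" "c2 < N" "c3 < N"
  then have "cls r1 < 2" "cls r2 < 2" "cls r3 < 2" using cls by auto
  from det3_class2[OF this, of F] ig_0
  show "det3 (F (cls r1) (cls c1)) (F (cls r1) (cls c2)) (F (cls r1) (cls c3)) (F (cls r2) (cls c1))
          (F (cls r2) (cls c2)) (F (cls r2) (cls c3)) (F (cls r3) (cls c1)) (F (cls r3) (cls c2))
          (F (cls r3) (cls c3)) \<in> ideal_generated G" by metis
qed

lemma ig_final:
  assumes "critical_ideal 3 A \<subseteq> ideal_generated G" "G \<subseteq> critical_ideal 3 A"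
  shows "critical_ideal 3 A = ideal_generated G"
proof -
  have "ideal_generated G \<subseteq> ideal_generated (critical_ideal 3 A)" by (rule ig_mono) (use assms(2) ig_gen in blast)
  also have "ideal_generated (critical_ideal 3 A) = critical_ideal 3 A"
  proof
    show "ideal_generated (critical_ideal 3 A) \<subseteq> critical_ideal 3 A"
      unfolding critical_ideal_def by (rule ig_mono) simp
  qed (auto intro: ig_gen)
  finally show ?thesis using assms(1) by blast
qed

lemma tp0: "i < m \<Longrightarrow> tri_part m n i = 0" by (simp add: tri_part_def)
lemma tp1: "m \<le> i \<Longrightarrow> i < m + n \<Longrightarrow> tri_part m n i = 1" by (simp add: tri_part_def)
lemma tp2: "m + n \<le> i \<Longrightarrow> tri_part m n i = 2" by (simp add: tri_part_def)

lemma case1: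
  assumes "m \<ge> 2" "n \<ge> 2" "p \<ge> 2"
  shows "critical_ideal 3 (LL m n p) = ideal_generated ({2} \<union> xv ` {1..m} \<union> yv m ` {1..n} \<union> zv m n ` {1..p})"
    (is "_ = ideal_generated ?G")
proof (rule ig_final)
  let ?F = "Fg (0::zpoly) 0 0 (-1)"
  show "critical_ideal 3 (LL m n p) \<subseteq> ideal_generated ?G"
  proof (rule minors_cls[OF LL_carrier, where F = ?F and cls = "tri_part m n"])
    fix i j assume ij: "i < m+n+p" "j < m+n+p"
    show "LL m n p $$ (i, j) - ?F (tri_part m n i) (tri_part m n j) \<in> ideal_generated ?G"
    proof (cases "i = j")
      case True
      have "Var i \<in> ?G" using ij Var_x[of i m] Var_y[of m i n] Var_z[of m n i p] by (cases "i < m"; cases "i < m+n") auto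
      then show ?thesis using True ij by (simp add: LL_ent Fg_def ig_gen)
    next
      case False
      then show ?thesis using ij by (simp add: LL_ent Fg_def ig_0)
    qed
  next
    show "tri_part m n i < 3" for i by (rule tri_part_lt3)
  next
    have "det3 (?F 0 0) (?F 0 1) (?F 0 2) (?F 1 0) (?F 1 1) (?F 1 2) (?F 2 0) (?F 2 1) (?F 2 2) = - 2"
      by (simp add: Fg_def det3_def)
    then show "det3 (?F 0 0) (?F 0 1) (?F 0 2) (?F 1 0) (?F 1 1) (?F 1 2) (?F 2 0) (?F 2 1) (?F 2 2) \<in> ideal_generated ?G"
      by (simp add: ig_neg ig_gen)
  qed
next
  show "?G \<subseteq> critical_ideal 3 (LL m n p)"
  proof (intro Un_least subsetI)
    fix g :: zpoly assume "g \<in> {2}"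
    then show "g \<in> critical_ideal 3 (LL m n p)"
      using gen_two[of m n 0 1 m "m+1" "m+n" "m+n+1" p] assms by (simp add: tri_part_def)
  next
    fix g :: zpoly assume "g \<in> xv ` {1..m}"
    then obtain i where i: "i \<in> {1..m}" "g = Var (i - 1)" unfolding xv_def by auto
    show "g \<in> critical_ideal 3 (LL m n p)" unfolding i(2)
      by (rule genA[of m n "i-1" 0 "if i - 1 = 0 then 1 else 0" "m+n" 2 "m+n+1" m 1])
         (use i assms in \<open>auto simp: tri_part_def\<close>)
  next
    fix g :: zpoly assume "g \<in> yv m ` {1..n}"
    then obtain i where i: "i \<in> {1..n}" "g = Var (m + i - 1)" unfolding yv_def by auto
    show "g \<in> critical_ideal 3 (LL m n p)" unfolding i(2)
      by (rule genA[of m n "m+i-1" 1 "if m + i - 1 = m then m+1 else m" 0 0 1 "m+n" 2])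
         (use i assms in \<open>auto simp: tri_part_def\<close>)
  next
    fix g :: zpoly assume "g \<in> zv m n ` {1..p}"
    then obtain i where i: "i \<in> {1..p}" "g = Var (m + n + i - 1)" unfolding zv_def by auto
    show "g \<in> critical_ideal 3 (LL m n p)" unfolding i(2)
      by (rule genA[of m n "m+n+i-1" 2 "if m + n + i - 1 = m+n then m+n+1 else m+n" 0 0 1 m 1])
         (use i assms in \<open>auto simp: tri_part_def\<close>)
  qed
qed


lemma case2:
  assumes "m \<ge> 2" "n \<ge> 2" "p = 1"
  shows "critical_ideal 3 (LL m n p) = ideal_generated (xv ` {1..m} \<union> yv m ` {1..n} \<union> {zv m n 1 + 2})"
    (is "_ = ideal_generated ?G")
proof (rule ig_final)
  let ?F = "Fg (0::zpoly) 0 (-2) (-1)"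
  show "critical_ideal 3 (LL m n p) \<subseteq> ideal_generated ?G"
  proof (rule minors_cls[OF LL_carrier, where F = ?F and cls = "tri_part m n"])
    fix i j assume ij: "i < m+n+p" "j < m+n+p"
    have e: "LL m n p $$ (i,j) = (if i = j then Var i else if tri_part m n i = tri_part m n j then 0 else -1)"
      by (rule LL_ent[OF ij])
    show "LL m n p $$ (i, j) - ?F (tri_part m n i) (tri_part m n j) \<in> ideal_generated ?G"
    proof (cases "i = j")
      case True
      show ?thesis
      proof (cases "i < m+n")
        case True
        have "Var i \<in> ?G" using ij Var_x[of i m] Var_y[of m i n] True by (cases "i < m") auto
        then show ?thesis unfolding e using True \<open>i = j\<close> ij by (simp add: LL_ent Fg_def ig_gen tri_part_def)
      next
        case False
        then have "i = m + n" using ij assms by auto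
        moreover have "zv m n 1 + 2 \<in> ?G" by simp
        ultimately show ?thesis unfolding e using \<open>i = j\<close> ij by (simp add: LL_ent Fg_def ig_gen tri_part_def zv_def)
      qed
    next
      case False
      then show ?thesis unfolding e using ij assms by (auto simp: LL_ent Fg_def ig_0 tri_part_def)
    qed
  next
    show "tri_part m n i < 3" for i by (rule tri_part_lt3)
  next
    have "det3 (?F 0 0) (?F 0 1) (?F 0 2) (?F 1 0) (?F 1 1) (?F 1 2) (?F 2 0) (?F 2 1) (?F 2 2) = 0"
      by (simp add: Fg_def det3_def)
    then show "det3 (?F 0 0) (?F 0 1) (?F 0 2) (?F 1 0) (?F 1 1) (?F 1 2) (?F 2 0) (?F 2 1) (?F 2 2) \<in> ideal_generated ?G"
      by (simp add: ig_0)
  qed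
next
  show "?G \<subseteq> critical_ideal 3 (LL m n p)"
  proof (intro Un_least subsetI)
    fix g :: zpoly assume "g \<in> {zv m n 1 + 2}"
    then show "g \<in> critical_ideal 3 (LL m n p)"
      using gen_z2[of m n 0 1 m "m+1" "m+n" p] assms by (simp add: tri_part_def zv_def)
  next
    fix g :: zpoly assume "g \<in> xv ` {1..m}"
    then obtain i where i: "i \<in> {1..m}" "g = Var (i - 1)" unfolding xv_def by auto
    show "g \<in> critical_ideal 3 (LL m n p)" unfolding i(2)
      by (rule genA[of m n "i-1" 0 "if i - 1 = 0 then 1 else 0" m 1 "m+1" "m+n" 2])
         (use i assms in \<open>auto simp: tri_part_def\<close>)
  next
    fix g :: zpoly assume "g \<in> yv m ` {1..n}"
    then obtain i where i: "i \<in> {1..n}" "g = Var (m + i - 1)" unfolding yv_def by auto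
    show "g \<in> critical_ideal 3 (LL m n p)" unfolding i(2)
      by (rule genA[of m n "m+i-1" 1 "if m + i - 1 = m then m+1 else m" 0 0 1 "m+n" 2])
         (use i assms in \<open>auto simp: tri_part_def\<close>)
  qed
qed

lemma case3:
  assumes "m \<ge> 3" "n = 1" "p = 1"
  shows "critical_ideal 3 (LL m n p) = ideal_generated (xv ` {1..m} \<union> {yv m 1 + zv m n 1 + 2})"
    (is "_ = ideal_generated ?G")
proof (rule ig_final)
  let ?F = "Fg (0::zpoly) (- Var (m+1) - 2) (Var (m+1)) (-1)"
  show "critical_ideal 3 (LL m n p) \<subseteq> ideal_generated ?G"
  proof (rule minors_cls[OF LL_carrier, where F = ?F and cls = "tri_part m n"])
    fix i j assume ij: "i < m+n+p" "j < m+n+p"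
    have e: "LL m n p $$ (i,j) = (if i = j then Var i else if tri_part m n i = tri_part m n j then 0 else -1)"
      by (rule LL_ent[OF ij])
    show "LL m n p $$ (i, j) - ?F (tri_part m n i) (tri_part m n j) \<in> ideal_generated ?G"
    proof (cases "i = j")
      case True
      show ?thesis
      proof (cases "i < m")
        case True
        have "Var i \<in> ?G" using Var_x[of i m] True by auto
        then show ?thesis unfolding e using True \<open>i = j\<close> ij by (simp add: LL_ent Fg_def ig_gen tri_part_def)
      next
        case False
        then have "i = m \<or> i = m + 1" using ij assms by auto
        moreover have "yv m 1 + zv m n 1 + 2 \<in> ?G" by simp
        ultimately show ?thesis unfolding e using \<open>i = j\<close> ij assms
          by (auto simp: LL_ent Fg_def ig_gen ig_0 tri_part_def zv_def yv_def algebra_simps)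
      qed
    next
      case False
      then show ?thesis unfolding e using ij assms by (auto simp: LL_ent Fg_def ig_0 tri_part_def)
    qed
  next
    show "tri_part m n i < 3" for i by (rule tri_part_lt3)
  next
    have "det3 (?F 0 0) (?F 0 1) (?F 0 2) (?F 1 0) (?F 1 1) (?F 1 2) (?F 2 0) (?F 2 1) (?F 2 2) = 0"
      by (simp add: Fg_def det3_def algebra_simps)
    then show "det3 (?F 0 0) (?F 0 1) (?F 0 2) (?F 1 0) (?F 1 1) (?F 1 2) (?F 2 0) (?F 2 1) (?F 2 2) \<in> ideal_generated ?G"
      by (simp add: ig_0)
  qed
next
  show "?G \<subseteq> critical_ideal 3 (LL m n p)"
  proof (intro Un_least subsetI)
    fix g :: zpoly assume "g \<in> {yv m 1 + zv m n 1 + 2}"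
    then show "g \<in> critical_ideal 3 (LL m n p)"
      using gen_yz2[of m n 0 1 m "m+1" p] assms by (simp add: tri_part_def zv_def yv_def)
  next
    fix g :: zpoly assume "g \<in> xv ` {1..m}"
    then obtain i where i: "i \<in> {1..m}" "g = Var (i - 1)" unfolding xv_def by auto
    show "g \<in> critical_ideal 3 (LL m n p)" unfolding i(2)
      by (rule genB[of m n "i-1" 0 "if i - 1 = 0 then 1 else 0" "if i - 1 = 2 then 1 else 2" m])
         (use i assms in \<open>auto simp: tri_part_def\<close>)
  qed
qed

lemma case5:
  assumes "m \<ge> 3" "n \<ge> 3" "p = 0"
  shows "critical_ideal 3 (LL m n p) = ideal_generated (xv ` {1..m} \<union> yv m ` {1..n})"
    (is "_ = ideal_generated ?G")
proof (rule ig_final)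
  let ?F = "Fg (0::zpoly) 0 0 (-1)"
  show "critical_ideal 3 (LL m n p) \<subseteq> ideal_generated ?G"
  proof (rule minors_cls2[OF LL_carrier, where F = ?F and cls = "tri_part m n"])
    fix i j assume ij: "i < m+n+p" "j < m+n+p"
    have e: "LL m n p $$ (i,j) = (if i = j then Var i else if tri_part m n i = tri_part m n j then 0 else -1)"
      by (rule LL_ent[OF ij])
    show "LL m n p $$ (i, j) - ?F (tri_part m n i) (tri_part m n j) \<in> ideal_generated ?G"
    proof (cases "i = j")
      case True
      have "Var i \<in> ?G" using ij Var_x[of i m] Var_y[of m i n] assms by (cases "i < m") auto
      then show ?thesis unfolding e using True ij by (simp add: LL_ent Fg_def ig_gen)
    next
      case False
      then show ?thesis unfolding e using ij by (simp add: LL_ent Fg_def ig_0)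
    qed
  next
    show "tri_part m n i < 2" if "i < m + n + p" for i using that assms by (simp add: tri_part_def)
  qed
next
  show "?G \<subseteq> critical_ideal 3 (LL m n p)"
  proof (intro Un_least subsetI)
    fix g :: zpoly assume "g \<in> xv ` {1..m}"
    then obtain i where i: "i \<in> {1..m}" "g = Var (i - 1)" unfolding xv_def by auto
    show "g \<in> critical_ideal 3 (LL m n p)" unfolding i(2)
      by (rule genB[of m n "i-1" 0 "if i - 1 = 0 then 1 else 0" "if i - 1 = 2 then 1 else 2" m])
         (use i assms in \<open>auto simp: tri_part_def\<close>)
  next
    fix g :: zpoly assume "g \<in> yv m ` {1..n}"
    then obtain i where i: "i \<in> {1..n}" "g = Var (m + i - 1)" unfolding yv_def by auto
    show "g \<in> critical_ideal 3 (LL m n p)" unfolding i(2)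
      by (rule genB[of m n "m+i-1" 1 "if m + i - 1 = m then m+1 else m" "if m + i - 1 = m+2 then m+1 else m+2" 0])
         (use i assms in \<open>auto simp: tri_part_def\<close>)
  qed
qed

lemma case6:
  assumes "m \<ge> 3" "n = 2" "p = 0"
  shows "critical_ideal 3 (LL m n p) = ideal_generated (xv ` {1..m} \<union> {yv m 1 + yv m 2})"
    (is "_ = ideal_generated ?G")
proof (rule ig_final)
  let ?F = "Fg (Var m - Var m) (Var m) (- Var m) 0"
  let ?c = "\<lambda>i::nat. if i < m then 0 else if i = m then 1 else (2::nat)"
  show "critical_ideal 3 (LL m n p) \<subseteq> ideal_generated ?G"
  proof (rule minors_cls[OF LL_carrier, where F = ?F and cls = ?c])
    fix i j assume ij: "i < m+n+p" "j < m+n+p"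
    have e: "LL m n p $$ (i,j) = (if i = j then Var i else if tri_part m n i = tri_part m n j then 0 else -1)"
      by (rule LL_ent[OF ij])
    show "LL m n p $$ (i, j) - ?F (?c i) (?c j) \<in> ideal_generated ?G"
    proof (cases "i = j")
      case True
      show ?thesis
      proof (cases "i < m")
        case True
        have "Var i \<in> ?G" using Var_x[of i m] True by auto
        then show ?thesis unfolding e using True \<open>i = j\<close> ij by (simp add: LL_ent Fg_def ig_gen)
      next
        case False
        then have "i = m \<or> i = m + 1" using ij assms by auto
        moreover have "yv m 1 + yv m 2 \<in> ?G" by simp
        ultimately show ?thesis unfolding e using \<open>i = j\<close> ij assms
          by (auto simp: LL_ent Fg_def ig_gen ig_0 yv_def algebra_simps)
      qed
    next
      case False
      then show ?thesis unfolding e using ij assms by (auto simp: LL_ent Fg_def ig_0 tri_part_def)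
    qed
  next
    show "?c i < 3" for i by simp
  next
    have "det3 (?F 0 0) (?F 0 1) (?F 0 2) (?F 1 0) (?F 1 1) (?F 1 2) (?F 2 0) (?F 2 1) (?F 2 2) = 0"
      by (simp add: Fg_def det3_def algebra_simps)
    then show "det3 (?F 0 0) (?F 0 1) (?F 0 2) (?F 1 0) (?F 1 1) (?F 1 2) (?F 2 0) (?F 2 1) (?F 2 2) \<in> ideal_generated ?G"
      by (simp add: ig_0)
  qed
next
  show "?G \<subseteq> critical_ideal 3 (LL m n p)"
  proof (intro Un_least subsetI)
    fix g :: zpoly assume "g \<in> {yv m 1 + yv m 2}"
    then show "g \<in> critical_ideal 3 (LL m n p)"
      using gen_y1y2[of m n 0 1 m "m+1" p] assms by (simp add: tri_part_def yv_def)
  next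
    fix g :: zpoly assume "g \<in> xv ` {1..m}"
    then obtain i where i: "i \<in> {1..m}" "g = Var (i - 1)" unfolding xv_def by auto
    show "g \<in> critical_ideal 3 (LL m n p)" unfolding i(2)
      by (rule genB[of m n "i-1" 0 "if i - 1 = 0 then 1 else 0" "if i - 1 = 2 then 1 else 2" m])
         (use i assms in \<open>auto simp: tri_part_def\<close>)
  qed
qed

lemma case8:
  assumes "m \<ge> 3" "n = 1" "p = 0"
  shows "critical_ideal 3 (LL m n p) = ideal_generated (xv ` {1..m})"
    (is "_ = ideal_generated ?G")
proof (rule ig_final)
  let ?F = "Fg (0::zpoly) (Var m) 0 (-1)"
  show "critical_ideal 3 (LL m n p) \<subseteq> ideal_generated ?G"
  proof (rule minors_cls2[OF LL_carrier, where F = ?F and cls = "tri_part m n"])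
    fix i j assume ij: "i < m+n+p" "j < m+n+p"
    have e: "LL m n p $$ (i,j) = (if i = j then Var i else if tri_part m n i = tri_part m n j then 0 else -1)"
      by (rule LL_ent[OF ij])
    show "LL m n p $$ (i, j) - ?F (tri_part m n i) (tri_part m n j) \<in> ideal_generated ?G"
    proof (cases "i = j")
      case True
      show ?thesis
      proof (cases "i < m")
        case True
        have "Var i \<in> ?G" using Var_x[of i m] True by auto
        then show ?thesis unfolding e using True \<open>i = j\<close> ij by (simp add: LL_ent Fg_def ig_gen tri_part_def)
      next
        case False
        then have "i = m" using ij assms by auto
        then show ?thesis unfolding e using \<open>i = j\<close> ij assms
          by (auto simp: LL_ent Fg_def ig_0 tri_part_def)
      qed
    next
      case False
      then show ?thesis unfolding e using ij assms by (auto simp: LL_ent Fg_def ig_0 tri_part_def)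
    qed
  next
    show "tri_part m n i < 2" if "i < m + n + p" for i using that assms by (simp add: tri_part_def)
  qed
next
  show "?G \<subseteq> critical_ideal 3 (LL m n p)"
  proof (rule subsetI)
    fix g :: zpoly assume "g \<in> xv ` {1..m}"
    then obtain i where i: "i \<in> {1..m}" "g = Var (i - 1)" unfolding xv_def by auto
    show "g \<in> critical_ideal 3 (LL m n p)" unfolding i(2)
      by (rule genB[of m n "i-1" 0 "if i - 1 = 0 then 1 else 0" "if i - 1 = 2 then 1 else 2" m])
         (use i assms in \<open>auto simp: tri_part_def\<close>)
  qed
qed



lemma minors_sorted:
  fixes A :: "zpoly mat"
  assumes A: "A \<in> carrier_mat N N"
    and dE: "\<And>r1 r2 r3 c1 c2 c3. r1 < r2 \<Longrightarrow> r2 < r3 \<Longrightarrow> r3 < N \<Longrightarrow> c1 < c2 \<Longrightarrow> c2 < c3 \<Longrightarrow> c3 < N \<Longrightarrow>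
       dd A r1 r2 r3 c1 c2 c3 \<in> ideal_generated G"
  shows "critical_ideal 3 A \<subseteq> ideal_generated G"
  unfolding critical_ideal_def
proof (rule ig_mono, rule subsetI)
  fix x assume "x \<in> {det (submatrix A I J) |I J. I \<subseteq> {..<dim_row A} \<and> J \<subseteq> {..<dim_col A} \<and> card I = 3 \<and> card J = 3}"
  then obtain I J where x: "x = det (submatrix A I J)" and IJ: "I \<subseteq> {..<N}" "J \<subseteq> {..<N}" "card I = 3" "card J = 3"
    using A by auto
  obtain r1 r2 r3 where r: "r1 < r2" "r2 < r3" "I = {r1,r2,r3}" using card3_sorted[OF IJ(3)] by metis
  obtain c1 c2 c3 where c: "c1 < c2" "c2 < c3" "J = {c1,c2,c3}" using card3_sorted[OF IJ(4)] by metis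
  have rN: "r3 < N" using IJ(1) r by auto
  have cN: "c3 < N" using IJ(2) c by auto
  have "x = dd A r1 r2 r3 c1 c2 c3"
    unfolding x r(3) c(3) dd_def by (rule sub3_sorted[OF A r(1,2) rN c(1,2) cN])
  also have "\<dots> \<in> ideal_generated G" by (rule dE) (use r c rN cN in auto)
  finally show "x \<in> ideal_generated G" .
qed

lemma sorted4: "r1 < r2 \<Longrightarrow> r2 < r3 \<Longrightarrow> r3 < (4::nat) \<Longrightarrow>
  (r1 = 0 \<and> r2 = 1 \<and> r3 = 2) \<or> (r1 = 0 \<and> r2 = 1 \<and> r3 = 3) \<or> (r1 = 0 \<and> r2 = 2 \<and> r3 = 3) \<or> (r1 = 1 \<and> r2 = 2 \<and> r3 = 3)"
  by presburger

lemma ig_comb4: "g1 \<in> G \<Longrightarrow> g2 \<in> G \<Longrightarrow> g3 \<in> G \<Longrightarrow> g4 \<in> G \<Longrightarrow>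
  q1 * g1 + q2 * g2 + q3 * g3 + q4 * g4 \<in> ideal_generated G"
  by (intro ig_add ig_mult ig_gen)

lemma case4:
  assumes "m = 2" "n = 1" "p = 1"
  shows "critical_ideal 3 (LL m n p) = ideal_generated {xv 1 * xv 2 + xv 1 + xv 2, xv 1 * zv m n 1 + xv 1, xv 2 * zv m n 1 + xv 2, yv m 1 + zv m n 1 + 2}"
proof -
  have G: "{xv 1 * xv 2 + xv 1 + xv 2, xv 1 * zv m n 1 + xv 1, xv 2 * zv m n 1 + xv 2, yv m 1 + zv m n 1 + 2} = {Var 0 * Var 1 + Var 0 + Var 1, Var 0 * Var 3 + Var 0, Var 1 * Var 3 + Var 1, Var 2 + Var 3 + 2}"
    using assms by (simp add: xv_def yv_def zv_def)
  have ent: "LL m n p $$ (i,j) = (if i = j then Var i else if tri_part 2 1 i = tri_part 2 1 j then 0 else -1)"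
    if "i < 4" "j < 4" for i j
    using LL_ent[of i m n p j] that assms by simp
  have ents: "LL m n p $$ (0,0) = Var 0" "LL m n p $$ (0,1) = 0" "LL m n p $$ (0,2) = - 1" "LL m n p $$ (0,3) = - 1" "LL m n p $$ (1,0) = 0" "LL m n p $$ (1,1) = Var 1" "LL m n p $$ (1,2) = - 1" "LL m n p $$ (1,3) = - 1" "LL m n p $$ (2,0) = - 1" "LL m n p $$ (2,1) = - 1" "LL m n p $$ (2,2) = Var 2" "LL m n p $$ (2,3) = - 1" "LL m n p $$ (3,0) = - 1" "LL m n p $$ (3,1) = - 1" "LL m n p $$ (3,2) = - 1" "LL m n p $$ (3,3) = Var 3"
    by (simp_all add: ent tri_part_def)
  show ?thesis unfolding G
  proof (rule ig_final)
    show "critical_ideal 3 (LL m n p) \<subseteq> ideal_generated {Var 0 * Var 1 + Var 0 + Var 1, Var 0 * Var 3 + Var 0, Var 1 * Var 3 + Var 1, Var 2 + Var 3 + 2}" (is "_ \<subseteq> ideal_generated ?G")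
    proof (rule minors_sorted[OF LL_carrier])
      have f0: "dd (LL m n p) 0 1 2 0 1 2 \<in> ideal_generated ?G"
      proof -
        have "dd (LL m n p) 0 1 2 0 1 2 = ((1) * (Var 2)) * (Var 0 * Var 1 + Var 0 + Var 1) + ((1)) * (Var 0 * Var 3 + Var 0) + ((1)) * (Var 1 * Var 3 + Var 1) + ((-1) * (Var 1) + (-1) * (Var 0)) * (Var 2 + Var 3 + 2)"
          unfolding dd_def det3_def ents by (simp add: algebra_simps power2_eq_square)
        also have "\<dots> \<in> ideal_generated ?G" by (rule ig_comb4) simp_all
        finally show ?thesis .
      qed
      have f1: "dd (LL m n p) 0 1 2 0 1 3 \<in> ideal_generated ?G"
      proof -
        have "dd (LL m n p) 0 1 2 0 1 3 = ((-1)) * (Var 0 * Var 1 + Var 0 + Var 1) + 0 * (Var 0 * Var 3 + Var 0) + 0 * (Var 1 * Var 3 + Var 1) + 0 * (Var 2 + Var 3 + 2)"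
          unfolding dd_def det3_def ents by (simp add: algebra_simps power2_eq_square)
        also have "\<dots> \<in> ideal_generated ?G" by (rule ig_comb4) simp_all
        finally show ?thesis .
      qed
      have f2: "dd (LL m n p) 0 1 2 0 2 3 \<in> ideal_generated ?G"
      proof -
        have "dd (LL m n p) 0 1 2 0 2 3 = 0 * (Var 0 * Var 1 + Var 0 + Var 1) + ((-1)) * (Var 0 * Var 3 + Var 0) + 0 * (Var 1 * Var 3 + Var 1) + ((1) * (Var 0)) * (Var 2 + Var 3 + 2)"
          unfolding dd_def det3_def ents by (simp add: algebra_simps power2_eq_square)
        also have "\<dots> \<in> ideal_generated ?G" by (rule ig_comb4) simp_all
        finally show ?thesis .
      qed
      have f3: "dd (LL m n p) 0 1 2 1 2 3 \<in> ideal_generated ?G"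
      proof -
        have "dd (LL m n p) 0 1 2 1 2 3 = 0 * (Var 0 * Var 1 + Var 0 + Var 1) + 0 * (Var 0 * Var 3 + Var 0) + ((1)) * (Var 1 * Var 3 + Var 1) + ((-1) * (Var 1)) * (Var 2 + Var 3 + 2)"
          unfolding dd_def det3_def ents by (simp add: algebra_simps power2_eq_square)
        also have "\<dots> \<in> ideal_generated ?G" by (rule ig_comb4) simp_all
        finally show ?thesis .
      qed
      have f4: "dd (LL m n p) 0 1 3 0 1 2 \<in> ideal_generated ?G"
      proof -
        have "dd (LL m n p) 0 1 3 0 1 2 = ((-1)) * (Var 0 * Var 1 + Var 0 + Var 1) + 0 * (Var 0 * Var 3 + Var 0) + 0 * (Var 1 * Var 3 + Var 1) + 0 * (Var 2 + Var 3 + 2)"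
          unfolding dd_def det3_def ents by (simp add: algebra_simps power2_eq_square)
        also have "\<dots> \<in> ideal_generated ?G" by (rule ig_comb4) simp_all
        finally show ?thesis .
      qed
      have f5: "dd (LL m n p) 0 1 3 0 1 3 \<in> ideal_generated ?G"
      proof -
        have "dd (LL m n p) 0 1 3 0 1 3 = ((1) * (Var 3)) * (Var 0 * Var 1 + Var 0 + Var 1) + ((-1)) * (Var 0 * Var 3 + Var 0) + ((-1)) * (Var 1 * Var 3 + Var 1) + 0 * (Var 2 + Var 3 + 2)"
          unfolding dd_def det3_def ents by (simp add: algebra_simps power2_eq_square)
        also have "\<dots> \<in> ideal_generated ?G" by (rule ig_comb4) simp_all
        finally show ?thesis .
      qed
      have f6: "dd (LL m n p) 0 1 3 0 2 3 \<in> ideal_generated ?G"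
      proof -
        have "dd (LL m n p) 0 1 3 0 2 3 = 0 * (Var 0 * Var 1 + Var 0 + Var 1) + ((-1)) * (Var 0 * Var 3 + Var 0) + 0 * (Var 1 * Var 3 + Var 1) + 0 * (Var 2 + Var 3 + 2)"
          unfolding dd_def det3_def ents by (simp add: algebra_simps power2_eq_square)
        also have "\<dots> \<in> ideal_generated ?G" by (rule ig_comb4) simp_all
        finally show ?thesis .
      qed
      have f7: "dd (LL m n p) 0 1 3 1 2 3 \<in> ideal_generated ?G"
      proof -
        have "dd (LL m n p) 0 1 3 1 2 3 = 0 * (Var 0 * Var 1 + Var 0 + Var 1) + 0 * (Var 0 * Var 3 + Var 0) + ((1)) * (Var 1 * Var 3 + Var 1) + 0 * (Var 2 + Var 3 + 2)"
          unfolding dd_def det3_def ents by (simp add: algebra_simps power2_eq_square)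
        also have "\<dots> \<in> ideal_generated ?G" by (rule ig_comb4) simp_all
        finally show ?thesis .
      qed
      have f8: "dd (LL m n p) 0 2 3 0 1 2 \<in> ideal_generated ?G"
      proof -
        have "dd (LL m n p) 0 2 3 0 1 2 = 0 * (Var 0 * Var 1 + Var 0 + Var 1) + ((-1)) * (Var 0 * Var 3 + Var 0) + 0 * (Var 1 * Var 3 + Var 1) + ((1) * (Var 0)) * (Var 2 + Var 3 + 2)"
          unfolding dd_def det3_def ents by (simp add: algebra_simps power2_eq_square)
        also have "\<dots> \<in> ideal_generated ?G" by (rule ig_comb4) simp_all
        finally show ?thesis .
      qed
      have f9: "dd (LL m n p) 0 2 3 0 1 3 \<in> ideal_generated ?G"
      proof -
        have "dd (LL m n p) 0 2 3 0 1 3 = 0 * (Var 0 * Var 1 + Var 0 + Var 1) + ((-1)) * (Var 0 * Var 3 + Var 0) + 0 * (Var 1 * Var 3 + Var 1) + 0 * (Var 2 + Var 3 + 2)"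
          unfolding dd_def det3_def ents by (simp add: algebra_simps power2_eq_square)
        also have "\<dots> \<in> ideal_generated ?G" by (rule ig_comb4) simp_all
        finally show ?thesis .
      qed
      have f10: "dd (LL m n p) 0 2 3 0 2 3 \<in> ideal_generated ?G"
      proof -
        have "dd (LL m n p) 0 2 3 0 2 3 = 0 * (Var 0 * Var 1 + Var 0 + Var 1) + ((1) + (1) * (Var 2)) * (Var 0 * Var 3 + Var 0) + 0 * (Var 1 * Var 3 + Var 1) + ((-1) + (-1) * (Var 0)) * (Var 2 + Var 3 + 2)"
          unfolding dd_def det3_def ents by (simp add: algebra_simps power2_eq_square)
        also have "\<dots> \<in> ideal_generated ?G" by (rule ig_comb4) simp_all
        finally show ?thesis .
      qed
      have f11: "dd (LL m n p) 0 2 3 1 2 3 \<in> ideal_generated ?G"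
      proof -
        have "dd (LL m n p) 0 2 3 1 2 3 = 0 * (Var 0 * Var 1 + Var 0 + Var 1) + 0 * (Var 0 * Var 3 + Var 0) + 0 * (Var 1 * Var 3 + Var 1) + ((-1)) * (Var 2 + Var 3 + 2)"
          unfolding dd_def det3_def ents by (simp add: algebra_simps power2_eq_square)
        also have "\<dots> \<in> ideal_generated ?G" by (rule ig_comb4) simp_all
        finally show ?thesis .
      qed
      have f12: "dd (LL m n p) 1 2 3 0 1 2 \<in> ideal_generated ?G"
      proof -
        have "dd (LL m n p) 1 2 3 0 1 2 = 0 * (Var 0 * Var 1 + Var 0 + Var 1) + 0 * (Var 0 * Var 3 + Var 0) + ((1)) * (Var 1 * Var 3 + Var 1) + ((-1) * (Var 1)) * (Var 2 + Var 3 + 2)"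
          unfolding dd_def det3_def ents by (simp add: algebra_simps power2_eq_square)
        also have "\<dots> \<in> ideal_generated ?G" by (rule ig_comb4) simp_all
        finally show ?thesis .
      qed
      have f13: "dd (LL m n p) 1 2 3 0 1 3 \<in> ideal_generated ?G"
      proof -
        have "dd (LL m n p) 1 2 3 0 1 3 = 0 * (Var 0 * Var 1 + Var 0 + Var 1) + 0 * (Var 0 * Var 3 + Var 0) + ((1)) * (Var 1 * Var 3 + Var 1) + 0 * (Var 2 + Var 3 + 2)"
          unfolding dd_def det3_def ents by (simp add: algebra_simps power2_eq_square)
        also have "\<dots> \<in> ideal_generated ?G" by (rule ig_comb4) simp_all
        finally show ?thesis .
      qed
      have f14: "dd (LL m n p) 1 2 3 0 2 3 \<in> ideal_generated ?G"
      proof -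
        have "dd (LL m n p) 1 2 3 0 2 3 = 0 * (Var 0 * Var 1 + Var 0 + Var 1) + 0 * (Var 0 * Var 3 + Var 0) + 0 * (Var 1 * Var 3 + Var 1) + ((-1)) * (Var 2 + Var 3 + 2)"
          unfolding dd_def det3_def ents by (simp add: algebra_simps power2_eq_square)
        also have "\<dots> \<in> ideal_generated ?G" by (rule ig_comb4) simp_all
        finally show ?thesis .
      qed
      have f15: "dd (LL m n p) 1 2 3 1 2 3 \<in> ideal_generated ?G"
      proof -
        have "dd (LL m n p) 1 2 3 1 2 3 = 0 * (Var 0 * Var 1 + Var 0 + Var 1) + 0 * (Var 0 * Var 3 + Var 0) + ((1) + (1) * (Var 2)) * (Var 1 * Var 3 + Var 1) + ((-1) + (-1) * (Var 1)) * (Var 2 + Var 3 + 2)"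
          unfolding dd_def det3_def ents by (simp add: algebra_simps power2_eq_square)
        also have "\<dots> \<in> ideal_generated ?G" by (rule ig_comb4) simp_all
        finally show ?thesis .
      qed
      fix r1 r2 r3 c1 c2 c3 :: nat
      assume "r1 < r2" "r2 < r3" "r3 < m+n+p" "c1 < c2" "c2 < c3" "c3 < m+n+p"
      then have "r3 < 4" "c3 < 4" using assms by auto
      from sorted4[OF \<open>r1 < r2\<close> \<open>r2 < r3\<close> this(1)] sorted4[OF \<open>c1 < c2\<close> \<open>c2 < c3\<close> this(2)]
      show "dd (LL m n p) r1 r2 r3 c1 c2 c3 \<in> ideal_generated ?G"
        using f0 f1 f2 f3 f4 f5 f6 f7 f8 f9 f10 f11 f12 f13 f14 f15 by (elim disjE conjE) simp_all
    qed
  next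
    show "{Var 0 * Var 1 + Var 0 + Var 1, Var 0 * Var 3 + Var 0, Var 1 * Var 3 + Var 1, Var 2 + Var 3 + 2} \<subseteq> critical_ideal 3 (LL m n p)"
    proof -
      have "dd (LL m n p) 0 1 3 0 1 2 = - (Var 0 * Var 1 + Var 0 + Var 1)"
        unfolding dd_def det3_def ents by (simp add: algebra_simps power2_eq_square)
      then have "Var 0 * Var 1 + Var 0 + Var 1 \<in> critical_ideal 3 (LL m n p)"
        by (intro gen_in[of "LL m n p" "m+n+p" 0 1 3 0 1 2, OF LL_carrier]) (use assms in auto)
      moreover
      have "dd (LL m n p) 0 2 3 0 1 3 = - (Var 0 * Var 3 + Var 0)"
        unfolding dd_def det3_def ents by (simp add: algebra_simps power2_eq_square)
      then have "Var 0 * Var 3 + Var 0 \<in> critical_ideal 3 (LL m n p)"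
        by (intro gen_in[of "LL m n p" "m+n+p" 0 2 3 0 1 3, OF LL_carrier]) (use assms in auto)
      moreover
      have "dd (LL m n p) 1 2 3 0 1 3 = (Var 1 * Var 3 + Var 1)"
        unfolding dd_def det3_def ents by (simp add: algebra_simps power2_eq_square)
      then have "Var 1 * Var 3 + Var 1 \<in> critical_ideal 3 (LL m n p)"
        by (intro gen_in[of "LL m n p" "m+n+p" 1 2 3 0 1 3, OF LL_carrier]) (use assms in auto)
      moreover
      have "dd (LL m n p) 1 2 3 0 2 3 = - (Var 2 + Var 3 + 2)"
        unfolding dd_def det3_def ents by (simp add: algebra_simps power2_eq_square)
      then have "Var 2 + Var 3 + 2 \<in> critical_ideal 3 (LL m n p)"
        by (intro gen_in[of "LL m n p" "m+n+p" 1 2 3 0 2 3, OF LL_carrier]) (use assms in auto)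
      ultimately show ?thesis by auto
    qed
  qed
qed

lemma case7:
  assumes "m = 2" "n = 2" "p = 0"
  shows "critical_ideal 3 (LL m n p) = ideal_generated {xv 2 * yv m 2, xv 1 + xv 2, yv m 1 + yv m 2}"
proof -
  have G: "{xv 2 * yv m 2, xv 1 + xv 2, yv m 1 + yv m 2} = {Var 1 * Var 3, Var 0 + Var 1, Var 2 + Var 3}"
    using assms by (simp add: xv_def yv_def zv_def)
  have ent: "LL m n p $$ (i,j) = (if i = j then Var i else if tri_part 2 2 i = tri_part 2 2 j then 0 else -1)"
    if "i < 4" "j < 4" for i j
    using LL_ent[of i m n p j] that assms by simp
  have ents: "LL m n p $$ (0,0) = Var 0" "LL m n p $$ (0,1) = 0" "LL m n p $$ (0,2) = - 1" "LL m n p $$ (0,3) = - 1" "LL m n p $$ (1,0) = 0" "LL m n p $$ (1,1) = Var 1" "LL m n p $$ (1,2) = - 1" "LL m n p $$ (1,3) = - 1" "LL m n p $$ (2,0) = - 1" "LL m n p $$ (2,1) = - 1" "LL m n p $$ (2,2) = Var 2" "LL m n p $$ (2,3) = 0" "LL m n p $$ (3,0) = - 1" "LL m n p $$ (3,1) = - 1" "LL m n p $$ (3,2) = 0" "LL m n p $$ (3,3) = Var 3"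
    by (simp_all add: ent tri_part_def)
  show ?thesis unfolding G
  proof (rule ig_final)
    show "critical_ideal 3 (LL m n p) \<subseteq> ideal_generated {Var 1 * Var 3, Var 0 + Var 1, Var 2 + Var 3}" (is "_ \<subseteq> ideal_generated ?G")
    proof (rule minors_sorted[OF LL_carrier])
      have f0: "dd (LL m n p) 0 1 2 0 1 2 \<in> ideal_generated ?G"
      proof -
        have "dd (LL m n p) 0 1 2 0 1 2 = ((1) * (Var 1)) * (Var 1 * Var 3) + ((-1) + (1) * (Var 1) * (Var 2)) * (Var 0 + Var 1) + ((-1) * (Var 1)^2) * (Var 2 + Var 3) + 0 * (Var 2 + Var 3)"
          unfolding dd_def det3_def ents by (simp add: algebra_simps power2_eq_square)
        also have "\<dots> \<in> ideal_generated ?G" by (rule ig_comb4) simp_all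
        finally show ?thesis .
      qed
      have f1: "dd (LL m n p) 0 1 2 0 1 3 \<in> ideal_generated ?G"
      proof -
        have "dd (LL m n p) 0 1 2 0 1 3 = 0 * (Var 1 * Var 3) + ((-1)) * (Var 0 + Var 1) + 0 * (Var 2 + Var 3) + 0 * (Var 2 + Var 3)"
          unfolding dd_def det3_def ents by (simp add: algebra_simps power2_eq_square)
        also have "\<dots> \<in> ideal_generated ?G" by (rule ig_comb4) simp_all
        finally show ?thesis .
      qed
      have f2: "dd (LL m n p) 0 1 2 0 2 3 \<in> ideal_generated ?G"
      proof -
        have "dd (LL m n p) 0 1 2 0 2 3 = ((1)) * (Var 1 * Var 3) + ((1) * (Var 2)) * (Var 0 + Var 1) + ((-1) * (Var 1)) * (Var 2 + Var 3) + 0 * (Var 2 + Var 3)"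
          unfolding dd_def det3_def ents by (simp add: algebra_simps power2_eq_square)
        also have "\<dots> \<in> ideal_generated ?G" by (rule ig_comb4) simp_all
        finally show ?thesis .
      qed
      have f3: "dd (LL m n p) 0 1 2 1 2 3 \<in> ideal_generated ?G"
      proof -
        have "dd (LL m n p) 0 1 2 1 2 3 = ((1)) * (Var 1 * Var 3) + 0 * (Var 0 + Var 1) + ((-1) * (Var 1)) * (Var 2 + Var 3) + 0 * (Var 2 + Var 3)"
          unfolding dd_def det3_def ents by (simp add: algebra_simps power2_eq_square)
        also have "\<dots> \<in> ideal_generated ?G" by (rule ig_comb4) simp_all
        finally show ?thesis .
      qed
      have f4: "dd (LL m n p) 0 1 3 0 1 2 \<in> ideal_generated ?G"
      proof -
        have "dd (LL m n p) 0 1 3 0 1 2 = 0 * (Var 1 * Var 3) + ((-1)) * (Var 0 + Var 1) + 0 * (Var 2 + Var 3) + 0 * (Var 2 + Var 3)"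
          unfolding dd_def det3_def ents by (simp add: algebra_simps power2_eq_square)
        also have "\<dots> \<in> ideal_generated ?G" by (rule ig_comb4) simp_all
        finally show ?thesis .
      qed
      have f5: "dd (LL m n p) 0 1 3 0 1 3 \<in> ideal_generated ?G"
      proof -
        have "dd (LL m n p) 0 1 3 0 1 3 = ((1) * (Var 0)) * (Var 1 * Var 3) + ((-1)) * (Var 0 + Var 1) + 0 * (Var 2 + Var 3) + 0 * (Var 2 + Var 3)"
          unfolding dd_def det3_def ents by (simp add: algebra_simps power2_eq_square)
        also have "\<dots> \<in> ideal_generated ?G" by (rule ig_comb4) simp_all
        finally show ?thesis .
      qed
      have f6: "dd (LL m n p) 0 1 3 0 2 3 \<in> ideal_generated ?G"
      proof -
        have "dd (LL m n p) 0 1 3 0 2 3 = ((1)) * (Var 1 * Var 3) + ((-1) * (Var 3)) * (Var 0 + Var 1) + 0 * (Var 2 + Var 3) + 0 * (Var 2 + Var 3)"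
          unfolding dd_def det3_def ents by (simp add: algebra_simps power2_eq_square)
        also have "\<dots> \<in> ideal_generated ?G" by (rule ig_comb4) simp_all
        finally show ?thesis .
      qed
      have f7: "dd (LL m n p) 0 1 3 1 2 3 \<in> ideal_generated ?G"
      proof -
        have "dd (LL m n p) 0 1 3 1 2 3 = ((1)) * (Var 1 * Var 3) + 0 * (Var 0 + Var 1) + 0 * (Var 2 + Var 3) + 0 * (Var 2 + Var 3)"
          unfolding dd_def det3_def ents by (simp add: algebra_simps power2_eq_square)
        also have "\<dots> \<in> ideal_generated ?G" by (rule ig_comb4) simp_all
        finally show ?thesis .
      qed
      have f8: "dd (LL m n p) 0 2 3 0 1 2 \<in> ideal_generated ?G"
      proof -
        have "dd (LL m n p) 0 2 3 0 1 2 = ((1)) * (Var 1 * Var 3) + ((1) * (Var 2)) * (Var 0 + Var 1) + ((-1) * (Var 1)) * (Var 2 + Var 3) + 0 * (Var 2 + Var 3)"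
          unfolding dd_def det3_def ents by (simp add: algebra_simps power2_eq_square)
        also have "\<dots> \<in> ideal_generated ?G" by (rule ig_comb4) simp_all
        finally show ?thesis .
      qed
      have f9: "dd (LL m n p) 0 2 3 0 1 3 \<in> ideal_generated ?G"
      proof -
        have "dd (LL m n p) 0 2 3 0 1 3 = ((1)) * (Var 1 * Var 3) + ((-1) * (Var 3)) * (Var 0 + Var 1) + 0 * (Var 2 + Var 3) + 0 * (Var 2 + Var 3)"
          unfolding dd_def det3_def ents by (simp add: algebra_simps power2_eq_square)
        also have "\<dots> \<in> ideal_generated ?G" by (rule ig_comb4) simp_all
        finally show ?thesis .
      qed
      have f10: "dd (LL m n p) 0 2 3 0 2 3 \<in> ideal_generated ?G"
      proof -
        have "dd (LL m n p) 0 2 3 0 2 3 = ((-1) * (Var 2)) * (Var 1 * Var 3) + ((1) * (Var 2) * (Var 3)) * (Var 0 + Var 1) + ((-1)) * (Var 2 + Var 3) + 0 * (Var 2 + Var 3)"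
          unfolding dd_def det3_def ents by (simp add: algebra_simps power2_eq_square)
        also have "\<dots> \<in> ideal_generated ?G" by (rule ig_comb4) simp_all
        finally show ?thesis .
      qed
      have f11: "dd (LL m n p) 0 2 3 1 2 3 \<in> ideal_generated ?G"
      proof -
        have "dd (LL m n p) 0 2 3 1 2 3 = 0 * (Var 1 * Var 3) + 0 * (Var 0 + Var 1) + ((-1)) * (Var 2 + Var 3) + 0 * (Var 2 + Var 3)"
          unfolding dd_def det3_def ents by (simp add: algebra_simps power2_eq_square)
        also have "\<dots> \<in> ideal_generated ?G" by (rule ig_comb4) simp_all
        finally show ?thesis .
      qed
      have f12: "dd (LL m n p) 1 2 3 0 1 2 \<in> ideal_generated ?G"
      proof -
        have "dd (LL m n p) 1 2 3 0 1 2 = ((1)) * (Var 1 * Var 3) + 0 * (Var 0 + Var 1) + ((-1) * (Var 1)) * (Var 2 + Var 3) + 0 * (Var 2 + Var 3)"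
          unfolding dd_def det3_def ents by (simp add: algebra_simps power2_eq_square)
        also have "\<dots> \<in> ideal_generated ?G" by (rule ig_comb4) simp_all
        finally show ?thesis .
      qed
      have f13: "dd (LL m n p) 1 2 3 0 1 3 \<in> ideal_generated ?G"
      proof -
        have "dd (LL m n p) 1 2 3 0 1 3 = ((1)) * (Var 1 * Var 3) + 0 * (Var 0 + Var 1) + 0 * (Var 2 + Var 3) + 0 * (Var 2 + Var 3)"
          unfolding dd_def det3_def ents by (simp add: algebra_simps power2_eq_square)
        also have "\<dots> \<in> ideal_generated ?G" by (rule ig_comb4) simp_all
        finally show ?thesis .
      qed
      have f14: "dd (LL m n p) 1 2 3 0 2 3 \<in> ideal_generated ?G"
      proof -
        have "dd (LL m n p) 1 2 3 0 2 3 = 0 * (Var 1 * Var 3) + 0 * (Var 0 + Var 1) + ((-1)) * (Var 2 + Var 3) + 0 * (Var 2 + Var 3)"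
          unfolding dd_def det3_def ents by (simp add: algebra_simps power2_eq_square)
        also have "\<dots> \<in> ideal_generated ?G" by (rule ig_comb4) simp_all
        finally show ?thesis .
      qed
      have f15: "dd (LL m n p) 1 2 3 1 2 3 \<in> ideal_generated ?G"
      proof -
        have "dd (LL m n p) 1 2 3 1 2 3 = ((1) * (Var 2)) * (Var 1 * Var 3) + 0 * (Var 0 + Var 1) + ((-1)) * (Var 2 + Var 3) + 0 * (Var 2 + Var 3)"
          unfolding dd_def det3_def ents by (simp add: algebra_simps power2_eq_square)
        also have "\<dots> \<in> ideal_generated ?G" by (rule ig_comb4) simp_all
        finally show ?thesis .
      qed
      fix r1 r2 r3 c1 c2 c3 :: nat
      assume "r1 < r2" "r2 < r3" "r3 < m+n+p" "c1 < c2" "c2 < c3" "c3 < m+n+p"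
      then have "r3 < 4" "c3 < 4" using assms by auto
      from sorted4[OF \<open>r1 < r2\<close> \<open>r2 < r3\<close> this(1)] sorted4[OF \<open>c1 < c2\<close> \<open>c2 < c3\<close> this(2)]
      show "dd (LL m n p) r1 r2 r3 c1 c2 c3 \<in> ideal_generated ?G"
        using f0 f1 f2 f3 f4 f5 f6 f7 f8 f9 f10 f11 f12 f13 f14 f15 by (elim disjE conjE) simp_all
    qed
  next
    show "{Var 1 * Var 3, Var 0 + Var 1, Var 2 + Var 3} \<subseteq> critical_ideal 3 (LL m n p)"
    proof -
      have "dd (LL m n p) 1 2 3 0 1 3 = (Var 1 * Var 3)"
        unfolding dd_def det3_def ents by (simp add: algebra_simps power2_eq_square)
      then have "Var 1 * Var 3 \<in> critical_ideal 3 (LL m n p)"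
        by (intro gen_in[of "LL m n p" "m+n+p" 1 2 3 0 1 3, OF LL_carrier]) (use assms in auto)
      moreover
      have "dd (LL m n p) 0 1 3 0 1 2 = - (Var 0 + Var 1)"
        unfolding dd_def det3_def ents by (simp add: algebra_simps power2_eq_square)
      then have "Var 0 + Var 1 \<in> critical_ideal 3 (LL m n p)"
        by (intro gen_in[of "LL m n p" "m+n+p" 0 1 3 0 1 2, OF LL_carrier]) (use assms in auto)
      moreover
      have "dd (LL m n p) 1 2 3 0 2 3 = - (Var 2 + Var 3)"
        unfolding dd_def det3_def ents by (simp add: algebra_simps power2_eq_square)
      then have "Var 2 + Var 3 \<in> critical_ideal 3 (LL m n p)"
        by (intro gen_in[of "LL m n p" "m+n+p" 1 2 3 0 2 3, OF LL_carrier]) (use assms in auto)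
      ultimately show ?thesis by auto
    qed
  qed
qed


theorem theorem4p4:
  fixes m n p :: nat
  assumes "m \<ge> n" and "n \<ge> p" and "m + n + p \<ge> 4"
    and "graph_connected (m + n + p) (tri_mult m n)"
  defines "I3 \<equiv> critical_ideal 3 (gen_laplacian (m + n + p) (tri_mult m n))"
    and "X \<equiv> xv ` {1..m}" and "Y \<equiv> yv m ` {1..n}" and "Z \<equiv> zv m n ` {1..p}"
  shows
    "(m \<ge> 2 \<and> n \<ge> 2 \<and> p \<ge> 2 \<longrightarrow> I3 = ideal_generated ({2} \<union> X \<union> Y \<union> Z))
   \<and> (m \<ge> 2 \<and> n \<ge> 2 \<and> p = 1 \<longrightarrow> I3 = ideal_generated (X \<union> Y \<union> {zv m n 1 + 2}))
   \<and> (m \<ge> 3 \<and> n = 1 \<and> p = 1 \<longrightarrow> I3 = ideal_generated (X \<union> {yv m 1 + zv m n 1 + 2}))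
   \<and> (m = 2 \<and> n = 1 \<and> p = 1 \<longrightarrow> I3 = ideal_generated
        {xv 1 * xv 2 + xv 1 + xv 2, xv 1 * zv m n 1 + xv 1, xv 2 * zv m n 1 + xv 2,
         yv m 1 + zv m n 1 + 2})
   \<and> (m \<ge> 3 \<and> n \<ge> 3 \<and> p = 0 \<longrightarrow> I3 = ideal_generated (X \<union> Y))
   \<and> (m \<ge> 3 \<and> n = 2 \<and> p = 0 \<longrightarrow> I3 = ideal_generated (X \<union> {yv m 1 + yv m 2}))
   \<and> (m = 2 \<and> n = 2 \<and> p = 0 \<longrightarrow> I3 = ideal_generated
        {xv 2 * yv m 2, xv 1 + xv 2, yv m 1 + yv m 2})
   \<and> (m \<ge> 3 \<and> n = 1 \<and> p = 0 \<longrightarrow> I3 = ideal_generated X)"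
    unfolding I3_def X_def Y_def Z_def
  apply (intro conjI impI)
  subgoal by (rule case1) auto
  subgoal by (rule case2) auto
  subgoal by (rule case3) auto
  subgoal by (rule case4) auto
  subgoal by (rule case5) auto
  subgoal by (rule case6) auto
  subgoal by (rule case7) auto
  subgoal by (rule case8) auto
  done

end
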